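(* Let $H$ be a connected graph and consider Graph Substructure Networks (GSN, in either the GSN-v or the GSN-e variant) whose structural features are computed from the substructure collection $\mathcal{H}=\{H\}$. Suppose one of the following holds: (1) $H$ is not a star graph (of any size; here single vertices and single edges count as star graphs), and the structural features are computed by (not necessarily induced) subgraph matching, i.e. one counts all subgraphs $G_S$ of $G$ with $G_S\simeq H$, $\mathcal{V}_{G_S}\subseteq\mathcal{V}_G$, $\mathcal{E}_{G_S}\subseteq\mathcal{E}_G$; or (2) $H$ is neither a single vertex nor a single edge, and the structural features are computed by induced subgraph matching, i.e. one counts only subgraphs $G_S\simeq H$ with $\mathcal{E}_{G_S}=\mathcal{E}_G\cap(\mathcal{V}_{G_S}\times\mathcal{V}_{G_S})$. Then GSN is strictly more powerful than MPNNs and than the 1-WL test: (a) every function on graphs computable by an MPNN is computable by a GSN, and for any two (vertex-labelled) graphs that the 1-WL test distinguishes there exists a GSN (with suitable, e.g. injective, update and aggregation functions) producing different graph-level outputs for them; and (b) there exist two graphs $G_1,G_2$ that the 1-WL test (and hence every MPNN) does not distinguish, but for which some GSN produces different graph-level outputs.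
   Context: Graphs are finite, simple, undirected, with vertex set $\mathcal{V}_G$ and edge set $\mathcal{E}_G$, and possibly with vertex features (labels) from a countable set and edge features $\mathbf{e}_{u,v}$. Two graphs are isomorphic ($G\simeq H$) if there is an adjacency-preserving bijection between their vertex sets. For a graph $H$, $\mathrm{Aut}(H)$ is its automorphism group; the vertex orbits of $H$ are the classes $O^V_{H,1},\dots,O^V_{H,d_H}$ of the partition of $\mathcal{V}_H$ under $\mathrm{Aut}(H)$. Every automorphism $g$ induces a map $(u,v)\mapsto(g(u),g(v))$ on edges; the resulting classes of (oriented) edges are the edge orbits $O^E_{H,1},\dots$. Vertex structural features: for a graph $G$, a vertex $v$ and orbit index $i$, $x^V_{H,i}(v)=|\{G_S\subseteq G: G_S\simeq H,\ v\in\mathcal{V}_{G_S},\ f(v)\in O^V_{H,i}\}|$, where $f:\mathcal{V}_{G_S}\to\mathcal{V}_H$ is any isomorphism (the orbit does not depend on the choice). Edge structural features: $x^E_{H,i}(u,v)=|\{G_S\simeq H:(u,v)\in\mathcal{E}_{G_S},\ (f(u),f(v))\in O^E_{H,i}\}|$. For a collection $\mathcal{H}=\{H_1,\dots,H_K\}$, $\mathbf{x}^V_v$ and $\mathbf{x}^E_{u,v}$ are the concatenations over all $H\in\mathcal{H}$ and all orbits. A GSN layer updates vertex states by $\mathbf{h}^{t+1}_v=\mathrm{UP}^{t+1}(\mathbf{h}^t_v,\mathbf{m}^{t+1}_v)$, where for GSN-v $\mathbf{m}^{t+1}_v=M^{t+1}(\{\!\{(\mathbf{h}^t_v,\mathbf{h}^t_u,\mathbf{x}^V_v,\mathbf{x}^V_u,\mathbf{e}_{u,v})\}\!\}_{u\in\mathcal{N}(v)})$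 and for GSN-e $\mathbf{m}^{t+1}_v=M^{t+1}(\{\!\{(\mathbf{h}^t_v,\mathbf{h}^t_u,\mathbf{x}^E_{u,v},\mathbf{e}_{u,v})\}\!\}_{u\in\mathcal{N}(v)})$; here $\{\!\{\cdot\}\!\}$ denotes a multiset, $\mathrm{UP}^{t+1}$ is an arbitrary function and $M^{t+1}$ an arbitrary function on multisets, and $\mathbf{h}^0_v$ are the input vertex features. A graph-level output is obtained by applying a readout function to the multiset of final vertex states (e.g. a sum followed by a function). An MPNN is the same architecture without the structural features $\mathbf{x}^V,\mathbf{x}^E$. The 1-WL test assigns initial colours $c^0_v$ (the vertex labels) and refines $c^{t+1}_v=\mathrm{HASH}(c^t_v,\{\!\{c^t_u\}\!\}_{u\in\mathcal{N}(v)})$ with an injective $\mathrm{HASH}$; it distinguishes two graphs if their colour histograms differ at some iteration. A star graph is $K_{1,m}$ for some $m\ge 0$. *)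

theory Defs
  imports Main "HOL-Library.Multiset" "HOL-Library.Countable"
begin

text \<open>A simple undirected graph is given by a vertex set and a symmetric,
irreflexive set of oriented edges (arcs); each undirected edge {u,v} appears
as both (u,v) and (v,u).\<close>

record 'v sgraph =
  verts :: "'v set"
  arcs  :: "('v \<times> 'v) set"

definition wf_sgraph :: "('v, 'z) sgraph_scheme \<Rightarrow> bool" where
  "wf_sgraph G \<longleftrightarrow> finite (verts G) \<and> arcs G \<subseteq> verts G \<times> verts G
     \<and> sym (arcs G) \<and> irrefl (arcs G)"

record ('l, 'f) lgraph = "nat sgraph" +
  label :: "nat \<Rightarrow> 'l"
  efeat :: "nat \<Rightarrow> nat \<Rightarrow> 'f"

definition nbrs :: "('v, 'z) sgraph_scheme \<Rightarrow> 'v \<Rightarrow> 'v set" where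
  "nbrs G v = {u. (v, u) \<in> arcs G}"

definition connected_graph :: "'w sgraph \<Rightarrow> bool" where
  "connected_graph H \<longleftrightarrow> verts H \<noteq> {} \<and>
     (\<forall>x\<in>verts H. \<forall>y\<in>verts H. (x, y) \<in> (arcs H)\<^sup>*)"

definition is_star :: "'w sgraph \<Rightarrow> bool" where
  "is_star H \<longleftrightarrow> (\<exists>c\<in>verts H. \<forall>x y. (x, y) \<in> arcs H \<longleftrightarrow>
      (x \<in> verts H \<and> y \<in> verts H \<and> x \<noteq> y \<and> (x = c \<or> y = c)))"

definition is_single_vertex :: "'w sgraph \<Rightarrow> bool" where
  "is_single_vertex H \<longleftrightarrow> (\<exists>a. verts H = {a} \<and> arcs H = {})"

definition is_single_edge :: "'w sgraph \<Rightarrow> bool" where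
  "is_single_edge H \<longleftrightarrow> (\<exists>a b. a \<noteq> b \<and> verts H = {a, b} \<and> arcs H = {(a, b), (b, a)})"

datatype matching = Subgraph_Matching | Induced_Matching

definition subgraphs :: "matching \<Rightarrow> 'v set \<Rightarrow> ('v \<times> 'v) set \<Rightarrow> ('v set \<times> ('v \<times> 'v) set) set" where
  "subgraphs mode V A = {(S, ES). S \<subseteq> V \<and> ES \<subseteq> A \<inter> (S \<times> S) \<and> sym ES \<and>
      (mode = Induced_Matching \<longrightarrow> ES = A \<inter> (S \<times> S))}"

definition iso_onto :: "('v set \<times> ('v \<times> 'v) set) \<Rightarrow> 'w sgraph \<Rightarrow> ('v \<Rightarrow> 'w) \<Rightarrow> bool" where
  "iso_onto GS H f \<longleftrightarrow> bij_betw f (fst GS) (verts H) \<and>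
     (\<forall>x\<in>fst GS. \<forall>y\<in>fst GS. (x, y) \<in> snd GS \<longleftrightarrow> (f x, f y) \<in> arcs H)"

definition Aut :: "'w sgraph \<Rightarrow> ('w \<Rightarrow> 'w) set" where
  "Aut H = {g. iso_onto (verts H, arcs H) H g}"

definition vertex_orbits :: "'w sgraph \<Rightarrow> 'w set set" where
  "vertex_orbits H = (\<lambda>w. (\<lambda>g. g w) ` Aut H) ` verts H"

definition edge_orbits :: "'w sgraph \<Rightarrow> ('w \<times> 'w) set set" where
  "edge_orbits H = (\<lambda>(a, b). (\<lambda>g. (g a, g b)) ` Aut H) ` arcs H"

text \<open>Vertex structural feature x^V_{H,i}(v), indexed by the orbit Orb = O^V_{H,i}
itself (value 0 for sets that are not orbits); the whole function is the
feature vector x^V_v for the collection {H}.\<close>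

definition xV :: "matching \<Rightarrow> 'w sgraph \<Rightarrow> ('v, 'z) sgraph_scheme \<Rightarrow> 'v \<Rightarrow> 'w set \<Rightarrow> nat" where
  "xV mode H G v Orb = (if Orb \<in> vertex_orbits H then
     card {GS \<in> subgraphs mode (verts G) (arcs G).
             v \<in> fst GS \<and> (\<exists>f. iso_onto GS H f \<and> f v \<in> Orb)}
   else 0)"

definition xE :: "matching \<Rightarrow> 'w sgraph \<Rightarrow> ('v, 'z) sgraph_scheme \<Rightarrow> 'v \<times> 'v \<Rightarrow> ('w \<times> 'w) set \<Rightarrow> nat" where
  "xE mode H G e Orb = (if Orb \<in> edge_orbits H then
     card {GS \<in> subgraphs mode (verts G) (arcs G).
             e \<in> snd GS \<and> (\<exists>f. iso_onto GS H f \<and> (f (fst e), f (snd e)) \<in> Orb)}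
   else 0)"

text \<open>The message of layer t+1 at v is
M(\{\{(h_v, h_u, s(v,u), e_{u,v})\}\}_{u \<in> N(v)}), where s is the structural
information of the network type: unit for MPNNs, (x^V_v, x^V_u) for GSN-v,
x^E_{u,v} for GSN-e.\<close>

record ('l, 'h, 'm, 's, 'f, 'o) mpnet =
  inp     :: "'l \<Rightarrow> 'h"
  layers  :: "(('h \<Rightarrow> 'm \<Rightarrow> 'h) \<times> (('h \<times> 'h \<times> 's \<times> 'f) multiset \<Rightarrow> 'm)) list"
  readout :: "'h multiset \<Rightarrow> 'o"

definition layer_step ::
  "(nat \<Rightarrow> nat \<Rightarrow> 's) \<Rightarrow> ('l, 'f) lgraph \<Rightarrow>
   ('h \<Rightarrow> 'm \<Rightarrow> 'h) \<times> (('h \<times> 'h \<times> 's \<times> 'f) multiset \<Rightarrow> 'm) \<Rightarrow>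
   (nat \<Rightarrow> 'h) \<Rightarrow> (nat \<Rightarrow> 'h)" where
  "layer_step sf G L h = (\<lambda>v. fst L (h v)
      (snd L (image_mset (\<lambda>u. (h v, h u, sf v u, efeat G u v)) (mset_set (nbrs G v)))))"

definition final_states ::
  "(nat \<Rightarrow> nat \<Rightarrow> 's) \<Rightarrow> ('l, 'h, 'm, 's, 'f, 'o) mpnet \<Rightarrow> ('l, 'f) lgraph \<Rightarrow> nat \<Rightarrow> 'h" where
  "final_states sf N G = foldl (\<lambda>h L. layer_step sf G L h) (\<lambda>v. inp N (label G v)) (layers N)"

definition net_output ::
  "(nat \<Rightarrow> nat \<Rightarrow> 's) \<Rightarrow> ('l, 'h, 'm, 's, 'f, 'o) mpnet \<Rightarrow> ('l, 'f) lgraph \<Rightarrow> 'o" where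
  "net_output sf N G = readout N (image_mset (final_states sf N G) (mset_set (verts G)))"

definition mpnn_output :: "('l, 'h, 'm, unit, 'f, 'o) mpnet \<Rightarrow> ('l, 'f) lgraph \<Rightarrow> 'o" where
  "mpnn_output N G = net_output (\<lambda>_ _. ()) N G"

datatype gsn_variant = GSN_v | GSN_e

type_synonym 'w gsn_struct = "(('w set \<Rightarrow> nat) \<times> ('w set \<Rightarrow> nat)) + (('w \<times> 'w) set \<Rightarrow> nat)"

definition gsn_struct :: "matching \<Rightarrow> gsn_variant \<Rightarrow> 'w sgraph \<Rightarrow> ('l, 'f) lgraph \<Rightarrow>
    nat \<Rightarrow> nat \<Rightarrow> 'w gsn_struct" where
  "gsn_struct mode var H G v u = (case var of
       GSN_v \<Rightarrow> Inl (xV mode H G v, xV mode H G u)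
     | GSN_e \<Rightarrow> Inr (xE mode H G (u, v)))"

definition gsn_output ::
  "matching \<Rightarrow> gsn_variant \<Rightarrow> 'w sgraph \<Rightarrow> ('l, 'h, 'm, 'w gsn_struct, 'f, 'o) mpnet \<Rightarrow>
   ('l, 'f) lgraph \<Rightarrow> 'o" where
  "gsn_output mode var H N G = net_output (gsn_struct mode var H G) N G"

text \<open>Colours with a canonical injective HASH (the datatype constructor).\<close>

datatype 'l wl_colour = WL_Init 'l | WL_Refine "'l wl_colour" "'l wl_colour multiset"

primrec wl_col :: "('l, 'f) lgraph \<Rightarrow> nat \<Rightarrow> nat \<Rightarrow> 'l wl_colour" where
  "wl_col G 0 = (\<lambda>v. WL_Init (label G v))"
| "wl_col G (Suc t) = (\<lambda>v. WL_Refine (wl_col G t v)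
                              (image_mset (wl_col G t) (mset_set (nbrs G v))))"

definition wl_distinguishes :: "('l, 'f) lgraph \<Rightarrow> ('l, 'f) lgraph \<Rightarrow> bool" where
  "wl_distinguishes G1 G2 \<longleftrightarrow>
     (\<exists>t. image_mset (wl_col G1 t) (mset_set (verts G1)) \<noteq>
          image_mset (wl_col G2 t) (mset_set (verts G2)))"

end

theory Submission
  imports Defs
begin


definition menc :: "nat multiset \<Rightarrow> nat" where
  "menc M = to_nat (sorted_list_of_multiset M)"

lemma menc_inj: "menc M = menc M' \<Longrightarrow> M = M'"
  unfolding menc_def by (metis mset_sorted_list_of_multiset to_nat_split)

primrec enc :: "'l::countable wl_colour \<Rightarrow> nat" where
  "enc (WL_Init l) = to_nat (Inl l :: 'l + nat \<times> nat)"
| "enc (WL_Refine c M) = to_nat (Inr (enc c, menc (image_mset enc M)) :: 'l + nat \<times> nat)"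

lemma mset_inj_aux:
  "(\<forall>x\<in>#M. \<forall>y. f x = f y \<longrightarrow> x = y) \<Longrightarrow> image_mset f M = image_mset f M' \<Longrightarrow> M = M'"
proof (induction M arbitrary: M')
  case empty
  then show ?case by simp
next
  case (add x M)
  have "f x \<in># image_mset f M'" using add.prems(2) by (metis image_mset_add_mset union_single_eq_member)
  then obtain y where y: "y \<in># M'" "f y = f x" by auto
  have "y = x" using add.prems(1) y(2) by (metis union_single_eq_member)
  then have M': "M' = add_mset x (M' - {#x#})" using y by simp
  have "image_mset f M = image_mset f (M' - {#x#})"
    proof -
    have "image_mset f M' = add_mset (f x) (image_mset f (M' - {#x#}))" by (subst M') simp
    then show ?thesis using add.prems(2) by simp
  qed
  then have "M = M' - {#x#}" using add.IH add.prems(1) by auto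
  then show ?case using M' by simp
qed

lemma enc_inj: "enc x = enc y \<Longrightarrow> x = y"
proof (induction x arbitrary: y)
  case (WL_Init l)
  then show ?case by (cases y) auto
next
  case (WL_Refine c M)
  then show ?case
  proof (cases y)
    case (WL_Init l)
    then show ?thesis using WL_Refine by simp
  next
    case (WL_Refine c' M')
    with WL_Refine.prems have "enc c = enc c'" "menc (image_mset enc M) = menc (image_mset enc M')"
      by auto
    then have "c = c'" "image_mset enc M = image_mset enc M'" using WL_Refine.IH(1) menc_inj by auto
    then have "M = M'" using mset_inj_aux[of M enc M'] WL_Refine.IH(2) by auto
    then show ?thesis using \<open>c = c'\<close> WL_Refine by simp
  qed
qed

lemma foldl_replicate_step:
  assumes "\<And>k. F L0 (g k) = g (Suc k)"
  shows "foldl (\<lambda>h L. F L h) (g k) (replicate n L0) = g (k + n)"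
  using assms proof (induction n arbitrary: k)
  case (Suc n)
  show ?case using Suc.IH[of "Suc k"] by (simp add: assms)
qed simp

definition wlnet :: "nat \<Rightarrow> ('l::countable, nat, nat, 's, 'f, nat) mpnet" where
  "wlnet t = \<lparr>inp = (\<lambda>l. enc (WL_Init l)),
     layers = replicate t ((\<lambda>h m. to_nat (Inr (h, m) :: 'l + nat \<times> nat)),
                           (\<lambda>X. menc (image_mset (\<lambda>x. fst (snd x)) X))),
     readout = menc\<rparr>"

lemma wlnet_states:
  fixes G :: "('l::countable, 'f) lgraph" and sf :: "nat \<Rightarrow> nat \<Rightarrow> 's"
  shows "final_states sf (wlnet t :: ('l, nat, nat, 's, 'f, nat) mpnet) G = (\<lambda>v. enc (wl_col G t v))"
proof -
  define g where "g k = (\<lambda>v. enc (wl_col G k v))" for k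
  define L0 :: "(nat \<Rightarrow> nat \<Rightarrow> nat) \<times> ((nat \<times> nat \<times> 's \<times> 'f) multiset \<Rightarrow> nat)" where
    "L0 = ((\<lambda>h m. to_nat (Inr (h, m) :: 'l + nat \<times> nat)),
                           (\<lambda>X. menc (image_mset (\<lambda>x. fst (snd x)) X)))"
  have "foldl (\<lambda>h L. layer_step sf G L h) (g 0) (replicate t L0) = g (0 + t)"
    by (rule foldl_replicate_step)
       (auto simp: g_def L0_def layer_step_def multiset.map_comp comp_def)
  moreover have "final_states sf (wlnet t :: ('l, nat, nat, 's, 'f, nat) mpnet) G
     = foldl (\<lambda>h L. layer_step sf G L h) (g 0) (replicate t L0)"
    unfolding final_states_def wlnet_def L0_def g_def by simp
  ultimately show ?thesis by (simp add: g_def)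
qed

lemma partA:
  fixes N :: "('l, 'h, 'm, unit, 'f, 'o) mpnet" and sfG :: "('l, 'f) lgraph \<Rightarrow> nat \<Rightarrow> nat \<Rightarrow> 's"
  shows "\<exists>N' :: ('l, 'h, 'm, 's, 'f, 'o) mpnet. \<forall>G. net_output (sfG G) N' G = mpnn_output N G"
proof -
  define \<phi> :: "('h \<Rightarrow> 'm \<Rightarrow> 'h) \<times> (('h \<times> 'h \<times> unit \<times> 'f) multiset \<Rightarrow> 'm) \<Rightarrow>
      ('h \<Rightarrow> 'm \<Rightarrow> 'h) \<times> (('h \<times> 'h \<times> 's \<times> 'f) multiset \<Rightarrow> 'm)" where
    "\<phi> L = (fst L, \<lambda>X. snd L (image_mset (\<lambda>(a, b, s, e). (a, b, (), e)) X))" for L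
  define N' :: "('l, 'h, 'm, 's, 'f, 'o) mpnet" where
    "N' = \<lparr>inp = inp N, layers = map \<phi> (layers N), readout = readout N\<rparr>"
  have step: "layer_step sf G (\<phi> L) h = layer_step (\<lambda>_ _. ()) G L h" for sf and G :: "('l, 'f) lgraph" and L h
    unfolding layer_step_def \<phi>_def by (simp add: multiset.map_comp comp_def)
  have fl: "foldl (\<lambda>h L. layer_step sf G L h) h (map \<phi> Ls) = foldl (\<lambda>h L. layer_step (\<lambda>_ _. ()) G L h) h Ls"
    for sf and G :: "('l, 'f) lgraph" and Ls h
    by (induction Ls arbitrary: h) (simp_all add: step)
  show ?thesis
    by (rule exI[of _ N']) (simp add: N'_def mpnn_output_def net_output_def final_states_def fl)
qed

lemma partB:
  fixes G1 G2 :: "('l::countable, 'f) lgraph" and sf1 sf2 :: "nat \<Rightarrow> nat \<Rightarrow> 's"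
  assumes "wl_distinguishes G1 G2"
  shows "\<exists>N :: ('l, nat, nat, 's, 'f, nat) mpnet. net_output sf1 N G1 \<noteq> net_output sf2 N G2"
proof -
  obtain t where t: "image_mset (wl_col G1 t) (mset_set (verts G1)) \<noteq>
          image_mset (wl_col G2 t) (mset_set (verts G2))"
    using assms unfolding wl_distinguishes_def by blast
  have "net_output sf1 (wlnet t :: ('l, nat, nat, 's, 'f, nat) mpnet) G1 \<noteq>
        net_output sf2 (wlnet t :: ('l, nat, nat, 's, 'f, nat) mpnet) G2"
  proof
    assume "net_output sf1 (wlnet t :: ('l, nat, nat, 's, 'f, nat) mpnet) G1 =
        net_output sf2 (wlnet t :: ('l, nat, nat, 's, 'f, nat) mpnet) G2"
    then have "menc (image_mset enc (image_mset (wl_col G1 t) (mset_set (verts G1)))) =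
               menc (image_mset enc (image_mset (wl_col G2 t) (mset_set (verts G2))))"
      unfolding net_output_def wlnet_states by (simp add: wlnet_def multiset.map_comp comp_def)
    then have "image_mset enc (image_mset (wl_col G1 t) (mset_set (verts G1))) =
               image_mset enc (image_mset (wl_col G2 t) (mset_set (verts G2)))"
      by (rule menc_inj)
    from mset_inj_aux[OF _ this] enc_inj have "image_mset (wl_col G1 t) (mset_set (verts G1)) =
          image_mset (wl_col G2 t) (mset_set (verts G2))" by blast
    then show False using t by blast
  qed
  then show ?thesis by blast
qed

lemma const_step:
  fixes G :: "('l, 'f) lgraph"
  assumes "wf_sgraph G" "v \<in> verts G" "card (nbrs G v) = d"
    and "\<forall>u\<in>verts G. h u = c" and "\<forall>x y. efeat G x y = e0"
  shows "layer_step (\<lambda>_ _. ()) G L h v = fst L c (snd L (replicate_mset d (c, c, (), e0)))"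
proof -
  have sub: "nbrs G v \<subseteq> verts G" using assms(1) unfolding wf_sgraph_def nbrs_def by auto
  have fin: "finite (nbrs G v)" using assms(1) sub finite_subset unfolding wf_sgraph_def by blast
  have "image_mset (\<lambda>u. (h v, h u, (), efeat G u v)) (mset_set (nbrs G v)) =
        image_mset (\<lambda>u. (c, c, (), e0)) (mset_set (nbrs G v))"
    by (rule image_mset_cong) (use sub fin assms in auto)
  also have "\<dots> = replicate_mset d (c, c, (), e0)"
    by (simp add: image_mset_const_eq fin assms(3))
  finally show ?thesis unfolding layer_step_def using assms(2,4) by simp
qed

lemma reg_states:
  fixes G1 G2 :: "('l, 'f) lgraph"
  assumes w1: "wf_sgraph G1" and w2: "wf_sgraph G2"
    and d1: "\<forall>v\<in>verts G1. card (nbrs G1 v) = d" and d2: "\<forall>v\<in>verts G2. card (nbrs G2 v) = d"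
    and e1: "\<forall>x y. efeat G1 x y = e0" and e2: "\<forall>x y. efeat G2 x y = e0"
  shows "(\<forall>v\<in>verts G1. h1 v = c) \<Longrightarrow> (\<forall>v\<in>verts G2. h2 v = c) \<Longrightarrow>
    \<exists>c'. (\<forall>v\<in>verts G1. foldl (\<lambda>h L. layer_step (\<lambda>_ _. ()) G1 L h) h1 Ls v = c') \<and>
         (\<forall>v\<in>verts G2. foldl (\<lambda>h L. layer_step (\<lambda>_ _. ()) G2 L h) h2 Ls v = c')"
proof (induction Ls arbitrary: h1 h2 c)
  case Nil
  then show ?case by auto
next
  case (Cons L Ls)
  let ?c = "fst L c (snd L (replicate_mset d (c, c, (), e0)))"
  have "layer_step (\<lambda>_ _. ()) G1 L h1 v = ?c" if "v \<in> verts G1" for v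
    by (rule const_step[OF w1 that _ Cons.prems(1) e1]) (use d1 that in auto)
  moreover have "layer_step (\<lambda>_ _. ()) G2 L h2 v = ?c" if "v \<in> verts G2" for v
    by (rule const_step[OF w2 that _ Cons.prems(2) e2]) (use d2 that in auto)
  ultimately show ?case using Cons.IH[of "layer_step (\<lambda>_ _. ()) G1 L h1" ?c "layer_step (\<lambda>_ _. ()) G2 L h2"] by simp
qed

lemma reg_wl:
  fixes G1 G2 :: "('l, 'f) lgraph"
  assumes w1: "wf_sgraph G1" and w2: "wf_sgraph G2"
    and d1: "\<forall>v\<in>verts G1. card (nbrs G1 v) = d" and d2: "\<forall>v\<in>verts G2. card (nbrs G2 v) = d"
    and l1: "\<forall>v. label G1 v = l0" and l2: "\<forall>v. label G2 v = l0"
  shows "\<exists>c. (\<forall>v\<in>verts G1. wl_col G1 t v = c) \<and> (\<forall>v\<in>verts G2. wl_col G2 t v = c)"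
proof (induction t)
  case 0
  then show ?case using l1 l2 by auto
next
  case (Suc t)
  then obtain c where c: "\<forall>v\<in>verts G1. wl_col G1 t v = c" "\<forall>v\<in>verts G2. wl_col G2 t v = c" by blast
  have gen: "wl_col G (Suc t) v = WL_Refine c (replicate_mset d c)"
    if "wf_sgraph G" "v \<in> verts G" "card (nbrs G v) = d" "\<forall>u\<in>verts G. wl_col G t u = c"
    for G :: "('l, 'f) lgraph" and v
  proof -
    have sub: "nbrs G v \<subseteq> verts G" using that(1) unfolding wf_sgraph_def nbrs_def by auto
    have fin: "finite (nbrs G v)" using that(1) sub finite_subset unfolding wf_sgraph_def by blast
    have "image_mset (wl_col G t) (mset_set (nbrs G v)) = image_mset (\<lambda>u. c) (mset_set (nbrs G v))"
      by (rule image_mset_cong) (use sub fin that in auto)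
    then show ?thesis using that fin by (simp add: image_mset_const_eq)
  qed
  show ?case using gen[OF w1 _ _ c(1)] gen[OF w2 _ _ c(2)] d1 d2 by blast
qed

lemma reg_pair:
  fixes G1 G2 :: "('l, 'f) lgraph"
  assumes w1: "wf_sgraph G1" and w2: "wf_sgraph G2"
    and d1: "\<forall>v\<in>verts G1. card (nbrs G1 v) = d" and d2: "\<forall>v\<in>verts G2. card (nbrs G2 v) = d"
    and l1: "\<forall>v. label G1 v = l0" and l2: "\<forall>v. label G2 v = l0"
    and e1: "\<forall>x y. efeat G1 x y = e0" and e2: "\<forall>x y. efeat G2 x y = e0"
    and cv: "card (verts G1) = card (verts G2)"
  shows "\<not> wl_distinguishes G1 G2"
    and "\<forall>N :: ('l, 'h, 'm, unit, 'f, 'o) mpnet. mpnn_output N G1 = mpnn_output N G2"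
proof -
  have img: "image_mset g (mset_set (verts G)) = replicate_mset (card (verts G)) c"
    if "\<forall>v\<in>verts G. g v = c" "wf_sgraph G" for g :: "nat \<Rightarrow> 'x" and c and G :: "('l, 'f) lgraph"
  proof -
    have fin: "finite (verts G)" using that(2) unfolding wf_sgraph_def by blast
    have "image_mset g (mset_set (verts G)) = image_mset (\<lambda>_. c) (mset_set (verts G))"
      by (rule image_mset_cong) (use that fin in auto)
    then show ?thesis by (simp add: image_mset_const_eq fin)
  qed
  show "\<not> wl_distinguishes G1 G2"
    unfolding wl_distinguishes_def
  proof
    assume "\<exists>t. image_mset (wl_col G1 t) (mset_set (verts G1)) \<noteq> image_mset (wl_col G2 t) (mset_set (verts G2))"
    then obtain t where t: "image_mset (wl_col G1 t) (mset_set (verts G1)) \<noteq> image_mset (wl_col G2 t) (mset_set (verts G2))"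
      by blast
    obtain c where "\<forall>v\<in>verts G1. wl_col G1 t v = c" "\<forall>v\<in>verts G2. wl_col G2 t v = c"
      using reg_wl[OF w1 w2 d1 d2 l1 l2] by blast
    then show False using t img w1 w2 cv by metis
  qed
  show "\<forall>N :: ('l, 'h, 'm, unit, 'f, 'o) mpnet. mpnn_output N G1 = mpnn_output N G2"
  proof
    fix N :: "('l, 'h, 'm, unit, 'f, 'o) mpnet"
    obtain c' where c': "\<forall>v\<in>verts G1. final_states (\<lambda>_ _. ()) N G1 v = c'"
        "\<forall>v\<in>verts G2. final_states (\<lambda>_ _. ()) N G2 v = c'"
      using reg_states[OF w1 w2 d1 d2 e1 e2, of "\<lambda>v. inp N (label G1 v)" "inp N l0"
          "\<lambda>v. inp N (label G2 v)" "layers N"] l1 l2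
      unfolding final_states_def by auto
    show "mpnn_output N G1 = mpnn_output N G2"
      unfolding mpnn_output_def net_output_def using img[OF c'(1) w1] img[OF c'(2) w2] cv by simp
  qed
qed

definition mkg :: "'a::countable set \<Rightarrow> ('a \<Rightarrow> 'a \<Rightarrow> bool) \<Rightarrow> ('l, 'f) lgraph" where
  "mkg V R = \<lparr>verts = to_nat ` V, arcs = {(to_nat x, to_nat y) | x y. x \<in> V \<and> y \<in> V \<and> R x y},
     label = (\<lambda>_. undefined), efeat = (\<lambda>_ _. undefined)\<rparr>"

lemma mkg_simps:
  "verts (mkg V R) = to_nat ` V"
  "arcs (mkg V R) = {(to_nat x, to_nat y) | x y. x \<in> V \<and> y \<in> V \<and> R x y}"
  "label (mkg V R) = (\<lambda>_. undefined)" "efeat (mkg V R) = (\<lambda>_ _. undefined)"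
  by (simp_all add: mkg_def)

lemma mkg_arc_iff: "(to_nat x, to_nat y) \<in> arcs (mkg V R) \<longleftrightarrow> x \<in> V \<and> y \<in> V \<and> R x y"
  by (auto simp: mkg_simps)

lemma mkg_wf:
  assumes "finite V" "\<And>x y. R x y \<Longrightarrow> R y x" "\<And>x. \<not> R x x"
  shows "wf_sgraph (mkg V R)"
  unfolding wf_sgraph_def sym_def irrefl_def using assms by (auto simp: mkg_simps)

lemma mkg_deg:
  assumes "\<forall>x\<in>V. card {y\<in>V. R x y} = d"
  shows "\<forall>v\<in>verts (mkg V R :: ('l, 'f) lgraph). card (nbrs (mkg V R :: ('l, 'f) lgraph) v) = d"
proof
  fix v assume "v \<in> verts (mkg V R :: ('l, 'f) lgraph)"
  then obtain x where x: "x \<in> V" "v = to_nat x" by (auto simp: mkg_simps)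
  have eq: "nbrs (mkg V R :: ('l, 'f) lgraph) v = to_nat ` {y\<in>V. R x y}"
    unfolding nbrs_def using x by (auto simp: mkg_simps)
  have "card (to_nat ` {y\<in>V. R x y}) = card {y\<in>V. R x y}" by (rule card_image) (simp add: inj_on_def)
  then show "card (nbrs (mkg V R :: ('l, 'f) lgraph) v) = d" using assms x eq by simp
qed

lemma mkg_card: "card (verts (mkg V R)) = card V"
  by (simp add: mkg_simps card_image inj_on_def)


lemma comp_same:
  assumes wH: "wf_sgraph H" and cH: "connected_graph H"
    and sg: "(S, ES) \<in> subgraphs mode V A" and iso: "iso_onto (S, ES) H f"
    and cp: "\<forall>a b. (a, b) \<in> A \<longrightarrow> cp a = cp b"
    and ab: "a \<in> S" "b \<in> S"
  shows "cp a = cp b"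
proof -
  have bij: "bij_betw f S (verts H)" and arc: "\<forall>x\<in>S. \<forall>y\<in>S. (x, y) \<in> ES \<longleftrightarrow> (f x, f y) \<in> arcs H"
    using iso unfolding iso_onto_def by auto
  have ESA: "ES \<subseteq> A" using sg unfolding subgraphs_def by auto
  have AH: "arcs H \<subseteq> verts H \<times> verts H" using wH unfolding wf_sgraph_def by auto
  have fa: "f a \<in> verts H" "f b \<in> verts H" using bij ab bij_betwE by blast+
  have fab: "(f a, f b) \<in> (arcs H)\<^sup>*" using cH fa unfolding connected_graph_def by blast
  have gen: "\<exists>b'\<in>S. f b' = z \<and> cp b' = cp a" if "(f a, z) \<in> (arcs H)\<^sup>*" for z
    using that
  proof (induction rule: rtrancl_induct)
    case base
    show ?case using ab(1) by blast
  next
    case (step y z)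
    obtain b' where b': "b' \<in> S" "f b' = y" "cp b' = cp a" using step.IH by blast
    have "z \<in> verts H" using step.hyps(2) AH by blast
    then have "z \<in> f ` S" using bij by (simp add: bij_betw_def)
    then obtain b'' where b'': "b'' \<in> S" "f b'' = z" by blast
    have "(f b', f b'') \<in> arcs H" using step.hyps(2) b'(2) b''(2) by simp
    then have "(b', b'') \<in> ES" using arc b'(1) b''(1) by blast
    then have "cp b' = cp b''" using ESA cp by blast
    then show ?case using b' b'' by metis
  qed
  obtain b' where "b' \<in> S" "f b' = f b" "cp b' = cp a" using gen[OF fab] by blast
  moreover have "inj_on f S" using bij unfolding bij_betw_def by blast
  ultimately have "b' = b" using ab by (simp add: inj_on_eq_iff)
  then show ?thesis using \<open>cp b' = cp a\<close> by simp
qed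
lemma no_copy_small:
  assumes wH: "wf_sgraph H" and cH: "connected_graph H" and fV: "finite V"
    and cp: "\<forall>a b. (a, b) \<in> A \<longrightarrow> cp a = cp b"
    and small: "\<forall>c. card {x\<in>V. cp x = c} < card (verts H)"
  shows "\<not> (\<exists>GS\<in>subgraphs mode V A. \<exists>f. iso_onto GS H f)"
proof
  assume "\<exists>GS\<in>subgraphs mode V A. \<exists>f. iso_onto GS H f"
  then obtain S ES f where sg: "(S, ES) \<in> subgraphs mode V A" and iso: "iso_onto (S, ES) H f" by auto
  have bij: "bij_betw f S (verts H)" using iso unfolding iso_onto_def by auto
  have SV: "S \<subseteq> V" using sg unfolding subgraphs_def by auto
  have "verts H \<noteq> {}" using cH unfolding connected_graph_def by auto
  moreover have "f ` S = verts H" using bij by (simp add: bij_betw_def)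
  ultimately obtain a where a: "a \<in> S" by blast
  have "S \<subseteq> {x\<in>V. cp x = cp a}" using comp_same[OF wH cH sg iso cp a] SV by auto
  then have "card S \<le> card {x\<in>V. cp x = cp a}" using fV by (intro card_mono) auto
  moreover have "card S = card (verts H)" using bij by (rule bij_betw_same_card)
  ultimately show False using small[rule_format, of "cp a"] by linarith
qed

lemma no_copy_clique:
  assumes wH: "wf_sgraph H" and cH: "connected_graph H"
    and A: "\<forall>a b. (a, b) \<in> A \<longleftrightarrow> a \<in> V \<and> b \<in> V \<and> cp a = cp b \<and> a \<noteq> b"
    and nc: "p \<in> verts H" "q \<in> verts H" "p \<noteq> q" "(p, q) \<notin> arcs H"
  shows "\<not> (\<exists>GS\<in>subgraphs Induced_Matching V A. \<exists>f. iso_onto GS H f)"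
proof
  assume "\<exists>GS\<in>subgraphs Induced_Matching V A. \<exists>f. iso_onto GS H f"
  then obtain S ES f where sg: "(S, ES) \<in> subgraphs Induced_Matching V A" and iso: "iso_onto (S, ES) H f" by auto
  have bij: "bij_betw f S (verts H)" and arc: "\<forall>x\<in>S. \<forall>y\<in>S. (x, y) \<in> ES \<longleftrightarrow> (f x, f y) \<in> arcs H"
    using iso unfolding iso_onto_def by auto
  have SV: "S \<subseteq> V" and ES: "ES = A \<inter> S \<times> S" using sg unfolding subgraphs_def by auto
  have img: "f ` S = verts H" using bij by (simp add: bij_betw_def)
  obtain a where a: "a \<in> S" "f a = p" using img nc(1) by (metis imageE)
  obtain b where b: "b \<in> S" "f b = q" using img nc(2) by (metis imageE)
  have ab: "a \<in> S" "b \<in> S" "f a = p" "f b = q" using a b by auto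
  have "a \<noteq> b" using ab nc by auto
  have cp: "\<forall>a b. (a, b) \<in> A \<longrightarrow> cp a = cp b" using A by auto
  have "cp a = cp b" using comp_same[OF wH cH sg iso cp ab(1,2)] .
  then have "(a, b) \<in> ES" using A ES SV ab \<open>a \<noteq> b\<close> by auto
  then show False using arc ab nc by auto
qed

lemma no_copy_bip:
  assumes wH: "wf_sgraph H"
    and tri: "(p, q) \<in> arcs H" "(q, r) \<in> arcs H" "(p, r) \<in> arcs H"
    and col: "\<forall>a b. (a, b) \<in> A \<longrightarrow> (col a :: bool) \<noteq> col b"
  shows "\<not> (\<exists>GS\<in>subgraphs mode V A. \<exists>f. iso_onto GS H f)"
proof
  assume "\<exists>GS\<in>subgraphs mode V A. \<exists>f. iso_onto GS H f"
  then obtain S ES f where sg: "(S, ES) \<in> subgraphs mode V A" and iso: "iso_onto (S, ES) H f" by auto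
  have bij: "bij_betw f S (verts H)" and arc: "\<forall>x\<in>S. \<forall>y\<in>S. (x, y) \<in> ES \<longleftrightarrow> (f x, f y) \<in> arcs H"
    using iso unfolding iso_onto_def by auto
  have ESA: "ES \<subseteq> A" using sg unfolding subgraphs_def by auto
  have AH: "arcs H \<subseteq> verts H \<times> verts H" using wH unfolding wf_sgraph_def by auto
  have "p \<in> verts H" "q \<in> verts H" "r \<in> verts H" using tri AH by auto
  moreover have img: "f ` S = verts H" using bij by (simp add: bij_betw_def)
  ultimately obtain a b c where abc: "a \<in> S" "b \<in> S" "c \<in> S" "f a = p" "f b = q" "f c = r"
    by (metis imageE)
  have "(a, b) \<in> A" "(b, c) \<in> A" "(a, c) \<in> A" using arc abc tri ESA by auto
  then have "col a \<noteq> col b" "col b \<noteq> col c" "col a \<noteq> col c" using col by blast+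
  then show False by auto
qed

lemma mkg_copy:
  fixes V :: "'a::countable set" and H :: "'w sgraph"
  assumes S0V: "Sz \<subseteq> V" and bij: "bij_betw h Sz (verts H)" and sH: "sym (arcs H)"
    and fw: "\<forall>x\<in>Sz. \<forall>y\<in>Sz. (h x, h y) \<in> arcs H \<longrightarrow> R x y"
    and bw: "mode = Induced_Matching \<longrightarrow> (\<forall>x\<in>Sz. \<forall>y\<in>Sz. R x y \<longrightarrow> (h x, h y) \<in> arcs H)"
  shows "\<exists>GS\<in>subgraphs mode (verts (mkg V R :: ('l, 'f) lgraph)) (arcs (mkg V R :: ('l, 'f) lgraph)).
           \<exists>f. iso_onto GS H f"
proof -
  define S where "S = to_nat ` Sz"
  define ES where "ES = {(to_nat x, to_nat y) | x y. x \<in> Sz \<and> y \<in> Sz \<and> (h x, h y) \<in> arcs H}"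
  have sub: "(S, ES) \<in> subgraphs mode (verts (mkg V R :: ('l, 'f) lgraph)) (arcs (mkg V R :: ('l, 'f) lgraph))"
  proof -
    have "S \<subseteq> verts (mkg V R :: ('l, 'f) lgraph)" using S0V by (auto simp: S_def mkg_simps)
    moreover have "ES \<subseteq> arcs (mkg V R :: ('l, 'f) lgraph) \<inter> S \<times> S"
      using fw S0V by (auto simp: ES_def S_def mkg_simps)
    moreover have "sym ES" using sH unfolding sym_def ES_def by blast
    moreover have "mode = Induced_Matching \<longrightarrow> ES = arcs (mkg V R :: ('l, 'f) lgraph) \<inter> S \<times> S"
      using bw fw S0V by (auto simp: ES_def S_def mkg_simps)
    ultimately show ?thesis unfolding subgraphs_def by auto
  qed
  have "bij_betw from_nat S Sz" unfolding S_def
    by (rule bij_betw_byWitness[where f'=to_nat]) auto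
  then have "bij_betw (h \<circ> from_nat) S (verts H)" using bij by (rule bij_betw_trans)
  moreover have "\<forall>x\<in>S. \<forall>y\<in>S. (x, y) \<in> ES \<longleftrightarrow> ((h \<circ> from_nat) x, (h \<circ> from_nat) y) \<in> arcs H"
    by (auto simp: S_def ES_def)
  ultimately have "iso_onto (S, ES) H (h \<circ> from_nat)" unfolding iso_onto_def by simp
  then show ?thesis using sub by blast
qed

definition nz :: "'w gsn_struct \<Rightarrow> bool" where
  "nz s = (case s of Inl p \<Rightarrow> (\<exists>Ob. fst p Ob \<noteq> 0) | Inr e \<Rightarrow> (\<exists>Ob. e Ob \<noteq> 0))"

definition dnet :: "('l, nat, nat, 'w gsn_struct, 'f, nat) mpnet" where
  "dnet = \<lparr>inp = (\<lambda>_. 0),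
     layers = [(\<lambda>h m. m, \<lambda>X. if (\<exists>x\<in>#X. nz (fst (snd (snd x)))) then 1 else 0)],
     readout = (\<lambda>X. if (\<exists>x\<in>#X. x \<noteq> 0) then 1 else 0)\<rparr>"

lemma dnet_states:
  "final_states sf dnet G v =
     (if (\<exists>u\<in>#mset_set (nbrs G v). nz (sf v u)) then 1 else 0)"
  by (simp add: final_states_def dnet_def layer_step_def)

lemma dnet_none:
  fixes G :: "('l, 'f) lgraph" and H :: "'w sgraph"
  assumes "\<not> (\<exists>GS\<in>subgraphs mode (verts G) (arcs G). \<exists>f. iso_onto GS H f)"
  shows "gsn_output mode var H (dnet :: ('l, nat, nat, 'w gsn_struct, 'f, nat) mpnet) G = 0"
proof -
  have xV0: "xV mode H G v Ob = 0" for v Ob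
  proof -
    have "{GS \<in> subgraphs mode (verts G) (arcs G). v \<in> fst GS \<and> (\<exists>f. iso_onto GS H f \<and> f v \<in> Ob)} = {}"
      using assms by blast
    then show ?thesis unfolding xV_def by (simp only: card.empty if_cancel)
  qed
  have xE0: "xE mode H G e Ob = 0" for e Ob
  proof -
    have "{GS \<in> subgraphs mode (verts G) (arcs G). e \<in> snd GS \<and> (\<exists>f. iso_onto GS H f \<and> (f (fst e), f (snd e)) \<in> Ob)} = {}"
      using assms by blast
    then show ?thesis unfolding xE_def by (simp only: card.empty if_cancel)
  qed
  have "\<not> nz (gsn_struct mode var H G v u)" for v u
    by (cases var) (simp_all add: gsn_struct_def nz_def xV0 xE0)
  then have "final_states (gsn_struct mode var H G) dnet G v = 0" for v
    by (simp add: dnet_states)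
  then show ?thesis
    by (simp add: gsn_output_def net_output_def dnet_def)
qed

lemma id_Aut: "id \<in> Aut H"
  unfolding Aut_def iso_onto_def by simp

lemma finite_subgraphs:
  assumes "finite V" "finite A"
  shows "finite (subgraphs mode V A)"
proof -
  have "subgraphs mode V A \<subseteq> Pow V \<times> Pow A" unfolding subgraphs_def by auto
  then show ?thesis using assms finite_subset by blast
qed

lemma dnet_some:
  fixes G :: "('l, 'f) lgraph" and H :: "'w sgraph"
  assumes wG: "wf_sgraph G" and pq: "(p, q) \<in> arcs H" and wH: "wf_sgraph H"
    and sg: "(S, ES) \<in> subgraphs mode (verts G) (arcs G)" and iso: "iso_onto (S, ES) H f"
  shows "gsn_output mode var H (dnet :: ('l, nat, nat, 'w gsn_struct, 'f, nat) mpnet) G = 1"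
proof -
  have bij: "bij_betw f S (verts H)" and arc: "\<forall>x\<in>S. \<forall>y\<in>S. (x, y) \<in> ES \<longleftrightarrow> (f x, f y) \<in> arcs H"
    using iso unfolding iso_onto_def by auto
  have ESA: "ES \<subseteq> arcs G" and SV: "S \<subseteq> verts G" and symES: "sym ES"
    using sg unfolding subgraphs_def by auto
  have AH: "arcs H \<subseteq> verts H \<times> verts H" and sH: "sym (arcs H)"
    using wH unfolding wf_sgraph_def by auto
  have fV: "finite (verts G)" and AG: "arcs G \<subseteq> verts G \<times> verts G" using wG unfolding wf_sgraph_def by auto
  then have fA: "finite (arcs G)" using finite_subset by blast
  have img: "f ` S = verts H" using bij by (simp add: bij_betw_def)
  have "p \<in> verts H" "q \<in> verts H" using pq AH by auto
  then obtain a b where ab: "a \<in> S" "b \<in> S" "f a = p" "f b = q" using img by (metis imageE)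
  have abES: "(a, b) \<in> ES" using arc ab pq by auto
  then have baES: "(b, a) \<in> ES" using symES unfolding sym_def by blast
  have aV: "a \<in> verts G" using ab SV by auto
  have bN: "b \<in> nbrs G a" using abES ESA unfolding nbrs_def by auto
  have finN: "finite (nbrs G a)" using fA unfolding nbrs_def
    by (rule finite_surj[where f=snd]) force
  have fin_set: "finite {GS \<in> subgraphs mode (verts G) (arcs G). P GS}" for P
    using finite_subgraphs[OF fV fA] by simp
  have "nz (gsn_struct mode var H G a b)"
  proof (cases var)
    case GSN_v
    define Ob where "Ob = (\<lambda>g. g (f a)) ` Aut H"
    define Ss where "Ss = {GS \<in> subgraphs mode (verts G) (arcs G). a \<in> fst GS \<and> (\<exists>f. iso_onto GS H f \<and> f a \<in> Ob)}"
    have "f a \<in> Ob" unfolding Ob_def using id_Aut[of H] by (rule rev_image_eqI) simp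
    then have "a \<in> fst (S, ES) \<and> (\<exists>g. iso_onto (S, ES) H g \<and> g a \<in> Ob)"
      using ab(1) iso by auto
    then have mem: "(S, ES) \<in> Ss" unfolding Ss_def using sg by blast
    have "finite Ss" unfolding Ss_def by (rule fin_set)
    then have c0: "card Ss \<noteq> 0" using mem by auto
    have "f a \<in> verts H" using ab \<open>p \<in> verts H\<close> by simp
    then have "Ob \<in> vertex_orbits H" unfolding Ob_def vertex_orbits_def by (rule imageI)
    then have "xV mode H G a Ob \<noteq> 0" using c0 unfolding xV_def Ss_def by simp
    then show ?thesis using GSN_v unfolding gsn_struct_def nz_def by auto
  next
    case GSN_e
    define Ob where "Ob = (\<lambda>g. (g (f b), g (f a))) ` Aut H"
    define Ss where "Ss = {GS \<in> subgraphs mode (verts G) (arcs G). (b, a) \<in> snd GS \<and> (\<exists>f. iso_onto GS H f \<and> (f (fst (b, a)), f (snd (b, a))) \<in> Ob)}"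
    have "(f b, f a) \<in> Ob" unfolding Ob_def using id_Aut[of H] by (rule rev_image_eqI) simp
    then have "(b, a) \<in> snd (S, ES) \<and> (\<exists>g. iso_onto (S, ES) H g \<and> (g (fst (b, a)), g (snd (b, a))) \<in> Ob)"
      using baES iso by (intro conjI exI[of _ f]) simp_all
    then have mem: "(S, ES) \<in> Ss" unfolding Ss_def using sg by blast
    have "finite Ss" unfolding Ss_def by (rule fin_set)
    then have c0: "card Ss \<noteq> 0" using mem by auto
    have "(f b, f a) \<in> arcs H" using arc ab(1,2) baES by blast
    then have "Ob \<in> edge_orbits H" unfolding Ob_def edge_orbits_def
      by (rule image_eqI[rotated]) simp
    then have "xE mode H G (b, a) Ob \<noteq> 0" using c0 unfolding xE_def Ss_def by simp
    moreover have "gsn_struct mode var H G a b = Inr (xE mode H G (b, a))" by (simp add: gsn_struct_def GSN_e)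
    ultimately show ?thesis unfolding nz_def by auto
  qed
  then have nzb: "nz (gsn_struct mode var H G a b)" .
  have "b \<in># mset_set (nbrs G a)" using bN finN by simp
  then have "final_states (gsn_struct mode var H G) dnet G a = 1"
    unfolding dnet_states using nzb by auto
  moreover have "a \<in># mset_set (verts G)" using aV fV by simp
  ultimately have "\<exists>x\<in># image_mset (final_states (gsn_struct mode var H G) dnet G) (mset_set (verts G)). x \<noteq> 0"
    by force
  then show ?thesis
    unfolding gsn_output_def net_output_def by (simp add: dnet_def)
qed



lemma finish_mkg:
  fixes V :: "'a::countable set" and H :: "'w sgraph"
  assumes fV: "finite V"
    and s1: "\<And>x y. R1 x y \<Longrightarrow> R1 y x" and i1: "\<And>x. \<not> R1 x x"
    and s2: "\<And>x y. R2 x y \<Longrightarrow> R2 y x" and i2: "\<And>x. \<not> R2 x x"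
    and d1: "\<forall>x\<in>V. card {y\<in>V. R1 x y} = d" and d2: "\<forall>x\<in>V. card {y\<in>V. R2 x y} = d"
    and cp1: "\<exists>GS\<in>subgraphs mode (verts (mkg V R1 :: ('l, 'f) lgraph)) (arcs (mkg V R1 :: ('l, 'f) lgraph)).
           \<exists>f. iso_onto GS H f"
    and cp2: "\<not> (\<exists>GS\<in>subgraphs mode (verts (mkg V R2 :: ('l, 'f) lgraph)) (arcs (mkg V R2 :: ('l, 'f) lgraph)).
           \<exists>f. iso_onto GS H f)"
    and wH: "wf_sgraph H" and pq: "(p, q) \<in> arcs H"
  shows "\<exists>G1 G2 :: ('l, 'f) lgraph. wf_sgraph G1 \<and> wf_sgraph G2 \<and> \<not> wl_distinguishes G1 G2 \<and>
        (\<forall>N :: ('l, 'h, 'm, unit, 'f, 'o) mpnet. mpnn_output N G1 = mpnn_output N G2) \<and>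
        (\<exists>N :: ('l, nat, nat, 'w gsn_struct, 'f, nat) mpnet.
           gsn_output mode var H N G1 \<noteq> gsn_output mode var H N G2)"
proof -
  let ?G1 = "mkg V R1 :: ('l, 'f) lgraph"
  let ?G2 = "mkg V R2 :: ('l, 'f) lgraph"
  have w1: "wf_sgraph ?G1" by (rule mkg_wf[OF fV s1 i1])
  have w2: "wf_sgraph ?G2" by (rule mkg_wf[OF fV s2 i2])
  have dd1: "\<forall>v\<in>verts ?G1. card (nbrs ?G1 v) = d" by (rule mkg_deg[OF d1])
  have dd2: "\<forall>v\<in>verts ?G2. card (nbrs ?G2 v) = d" by (rule mkg_deg[OF d2])
  have l: "\<forall>v. label ?G1 v = undefined" "\<forall>v. label ?G2 v = undefined" by (simp_all add: mkg_simps)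
  have e: "\<forall>x y. efeat ?G1 x y = undefined" "\<forall>x y. efeat ?G2 x y = undefined" by (simp_all add: mkg_simps)
  have cv: "card (verts ?G1) = card (verts ?G2)" by (simp add: mkg_card)
  note rp = reg_pair[OF w1 w2 dd1 dd2 l(1) l(2) e(1) e(2) cv]
  obtain S ES f where sg: "(S, ES) \<in> subgraphs mode (verts ?G1) (arcs ?G1)" and iso: "iso_onto (S, ES) H f"
    using cp1 by auto
  have "gsn_output mode var H (dnet :: ('l, nat, nat, 'w gsn_struct, 'f, nat) mpnet) ?G1 = 1"
    by (rule dnet_some[OF w1 pq wH sg iso])
  moreover have "gsn_output mode var H (dnet :: ('l, nat, nat, 'w gsn_struct, 'f, nat) mpnet) ?G2 = 0"
    by (rule dnet_none[OF cp2])
  ultimately show ?thesis using w1 w2 rp by (metis zero_neq_one)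
qed

lemma pair2:
  fixes H :: "'w sgraph" and \<beta> :: "nat \<Rightarrow> 'w"
  assumes wH: "wf_sgraph H" and bij: "bij_betw \<beta> {0..<k} (verts H)"
    and tri: "(p, q) \<in> arcs H" "(q, r) \<in> arcs H" "(p, r) \<in> arcs H"
    and cpl: "mode = Induced_Matching \<longrightarrow> (\<forall>i<k. \<forall>j<k. i \<noteq> j \<longrightarrow> (\<beta> i, \<beta> j) \<in> arcs H)"
  shows "\<exists>G1 G2 :: ('l, 'f) lgraph. wf_sgraph G1 \<and> wf_sgraph G2 \<and> \<not> wl_distinguishes G1 G2 \<and>
        (\<forall>N :: ('l, 'h, 'm, unit, 'f, 'o) mpnet. mpnn_output N G1 = mpnn_output N G2) \<and>
        (\<exists>N :: ('l, nat, nat, 'w gsn_struct, 'f, nat) mpnet.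
           gsn_output mode var H N G1 \<noteq> gsn_output mode var H N G2)"
proof -
  define V :: "(nat \<times> bool) set" where "V = {0..<k} \<times> UNIV"
  define R1 :: "nat \<times> bool \<Rightarrow> nat \<times> bool \<Rightarrow> bool" where "R1 x y = (snd x = snd y \<and> fst x \<noteq> fst y)" for x y
  define R2 :: "nat \<times> bool \<Rightarrow> nat \<times> bool \<Rightarrow> bool" where "R2 x y = (snd x \<noteq> snd y \<and> fst x \<noteq> fst y)" for x y
  have fV: "finite V" unfolding V_def by simp
  have irr: "irrefl (arcs H)" and sH: "sym (arcs H)" using wH unfolding wf_sgraph_def by auto
  have d1: "\<forall>x\<in>V. card {y\<in>V. R1 x y} = k - 1"
  proof
    fix x assume "x \<in> V"
    then have "{y\<in>V. R1 x y} = ({0..<k} - {fst x}) \<times> {snd x}" and "fst x < k"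
      unfolding V_def R1_def by auto
    then show "card {y\<in>V. R1 x y} = k - 1" by (simp add: card_cartesian_product)
  qed
  have d2: "\<forall>x\<in>V. card {y\<in>V. R2 x y} = k - 1"
  proof
    fix x assume "x \<in> V"
    then have "{y\<in>V. R2 x y} = ({0..<k} - {fst x}) \<times> {\<not> snd x}" and "fst x < k"
      unfolding V_def R2_def by auto
    then show "card {y\<in>V. R2 x y} = k - 1" by (simp add: card_cartesian_product)
  qed
  have cp1: "\<exists>GS\<in>subgraphs mode (verts (mkg V R1 :: ('l, 'f) lgraph)) (arcs (mkg V R1 :: ('l, 'f) lgraph)).
           \<exists>f. iso_onto GS H f"
  proof (rule mkg_copy[where Sz = "{0..<k} \<times> {True}" and h = "\<beta> \<circ> fst"])
    show "{0..<k} \<times> {True} \<subseteq> V" unfolding V_def by auto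
    have "bij_betw fst ({0..<k} \<times> {True}) {0..<k}"
      by (rule bij_betw_byWitness[where f' = "\<lambda>i. (i, True)"]) auto
    then show "bij_betw (\<beta> \<circ> fst) ({0..<k} \<times> {True}) (verts H)" using bij by (rule bij_betw_trans)
    show "sym (arcs H)" by (rule sH)
    show "\<forall>x\<in>{0..<k} \<times> {True}. \<forall>y\<in>{0..<k} \<times> {True}. ((\<beta> \<circ> fst) x, (\<beta> \<circ> fst) y) \<in> arcs H \<longrightarrow> R1 x y"
      using irr unfolding R1_def irrefl_def by auto
    show "mode = Induced_Matching \<longrightarrow> (\<forall>x\<in>{0..<k} \<times> {True}. \<forall>y\<in>{0..<k} \<times> {True}. R1 x y \<longrightarrow> ((\<beta> \<circ> fst) x, (\<beta> \<circ> fst) y) \<in> arcs H)"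
      using cpl unfolding R1_def by auto
  qed
  have cp2: "\<not> (\<exists>GS\<in>subgraphs mode (verts (mkg V R2 :: ('l, 'f) lgraph)) (arcs (mkg V R2 :: ('l, 'f) lgraph)).
           \<exists>f. iso_onto GS H f)"
  proof (rule no_copy_bip[OF wH tri, where col = "\<lambda>n. snd (from_nat n :: nat \<times> bool)"])
    show "\<forall>a b. (a, b) \<in> arcs (mkg V R2 :: ('l, 'f) lgraph) \<longrightarrow>
        snd (from_nat a :: nat \<times> bool) \<noteq> snd (from_nat b :: nat \<times> bool)"
      unfolding mkg_simps R2_def by auto
  qed
  show ?thesis
    by (rule finish_mkg[OF fV _ _ _ _ d1 d2 cp1 cp2 wH tri(1)]) (auto simp: R1_def R2_def)
qed

definition flip :: "nat \<Rightarrow> bool list \<Rightarrow> bool list" where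
  "flip l s = s[l := \<not> s ! l]"

lemma flip_len[simp]: "length (flip l s) = length s"
  by (simp add: flip_def)

lemma flip_flip: "l < length s \<Longrightarrow> flip l (flip l s) = s"
  by (simp add: flip_def list_update_overwrite list_update_id)

lemma flip_neq: "l < length s \<Longrightarrow> flip l s \<noteq> s"
  unfolding flip_def by (metis nth_list_update_eq)

lemma flip_inj: "l < length s \<Longrightarrow> l' < length s \<Longrightarrow> flip l s = flip l' s \<Longrightarrow> l = l'"
  unfolding flip_def by (metis nth_list_update_eq nth_list_update_neq)

lemma pair1:
  fixes H :: "'w sgraph" and \<beta> :: "nat \<Rightarrow> 'w"
  assumes wH: "wf_sgraph H" and cH: "connected_graph H" and bij: "bij_betw \<beta> {0..<k} (verts H)"
    and pq: "(p, q) \<in> arcs H"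
    and degb: "\<forall>u<k. card {v\<in>{0..<k}. (\<beta> u, \<beta> v) \<in> arcs H} \<le> d"
    and nc: "(d + 1 < k) \<or>
             (mode = Induced_Matching \<and> (\<exists>p' q'. p' \<in> verts H \<and> q' \<in> verts H \<and> p' \<noteq> q' \<and> (p', q') \<notin> arcs H))"
  shows "\<exists>G1 G2 :: ('l, 'f) lgraph. wf_sgraph G1 \<and> wf_sgraph G2 \<and> \<not> wl_distinguishes G1 G2 \<and>
        (\<forall>N :: ('l, 'h, 'm, unit, 'f, 'o) mpnet. mpnn_output N G1 = mpnn_output N G2) \<and>
        (\<exists>N :: ('l, nat, nat, 'w gsn_struct, 'f, nat) mpnet.
           gsn_output mode var H N G1 \<noteq> gsn_output mode var H N G2)"
proof -
  define adj where "adj u v = ((\<beta> u, \<beta> v) \<in> arcs H)" for u v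
  define deg where "deg u = card {v\<in>{0..<k}. adj u v}" for u
  define V :: "(nat \<times> bool list \<times> nat) set" where "V = {0..<k} \<times> {s. length s = d} \<times> {0..<d+1}"
  define R1 :: "nat \<times> bool list \<times> nat \<Rightarrow> nat \<times> bool list \<times> nat \<Rightarrow> bool" where
    "R1 = (\<lambda>(u, s, i) (v, t, j). i = j \<and> ((s = t \<and> adj u v) \<or>
            (u = v \<and> (\<exists>l. l < length s \<and> l < d - deg u \<and> t = flip l s))))"
  define R2 :: "nat \<times> bool list \<times> nat \<Rightarrow> nat \<times> bool list \<times> nat \<Rightarrow> bool" where
    "R2 = (\<lambda>(u, s, i) (v, t, j). u = v \<and> s = t \<and> i \<noteq> j)"
  have R1s: "R1 (u, s, i) (v, t, j) = (i = j \<and> ((s = t \<and> adj u v) \<or>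
            (u = v \<and> (\<exists>l. l < length s \<and> l < d - deg u \<and> t = flip l s))))" for u s i v t j
    by (simp add: R1_def)
  have R2s: "R2 (u, s, i) (v, t, j) = (u = v \<and> s = t \<and> i \<noteq> j)" for u s i v t j
    by (simp add: R2_def)
  have irr: "irrefl (arcs H)" and sH: "sym (arcs H)" using wH unfolding wf_sgraph_def by auto
  have adj_sym: "adj u v \<Longrightarrow> adj v u" for u v using sH unfolding adj_def sym_def by blast
  have adj_irr: "\<not> adj u u" for u using irr unfolding adj_def irrefl_def by blast
  have "finite {s::bool list. length s = d}" using finite_lists_length_eq[of "UNIV::bool set" d] by simp
  then have fV: "finite V" unfolding V_def by (intro finite_cartesian_product) simp_all
  have s1: "R1 x y \<Longrightarrow> R1 y x" for x y
  proof -
    assume a: "R1 x y"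
    obtain u s i where x: "x = (u, s, i)" by (cases x) auto
    obtain v t j where y: "y = (v, t, j)" by (cases y) auto
    show "R1 y x" using a adj_sym flip_flip unfolding x y R1s by (metis flip_len)
  qed
  have i1: "\<not> R1 x x" for x
  proof -
    obtain u s i where x: "x = (u, s, i)" by (cases x) auto
    show ?thesis unfolding x R1s using adj_irr flip_neq by metis
  qed
  have s2: "R2 x y \<Longrightarrow> R2 y x" for x y by (cases x; cases y) (auto simp: R2s)
  have i2: "\<not> R2 x x" for x by (cases x) (auto simp: R2s)
  have d1: "\<forall>x\<in>V. card {y\<in>V. R1 x y} = d"
  proof
    fix x assume xV: "x \<in> V"
    obtain u s i where x: "x = (u, s, i)" by (cases x) auto
    have u: "u < k" and ls: "length s = d" and i: "i < d + 1" using xV unfolding x V_def by auto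
    have du: "deg u \<le> d" using degb u unfolding deg_def adj_def by auto
    define A where "A = (\<lambda>v. (v, s, i)) ` {v\<in>{0..<k}. adj u v}"
    define B where "B = (\<lambda>l. (u, flip l s, i)) ` {..< d - deg u}"
    have eq: "{y\<in>V. R1 x y} = A \<union> B"
    proof
      show "{y\<in>V. R1 x y} \<subseteq> A \<union> B"
      proof
        fix y assume "y \<in> {y\<in>V. R1 x y}"
        then have yV: "y \<in> V" and r: "R1 x y" by auto
        obtain v t j where y: "y = (v, t, j)" by (cases y) auto
        have "v < k" using yV unfolding y V_def by auto
        then show "y \<in> A \<union> B" using r unfolding x y A_def B_def by (auto simp: R1s)
      qed
      have rB: "R1 (u, s, i) (u, flip l s, i)" if "l < d - deg u" for l
        unfolding R1s by (rule conjI[OF refl], rule disjI2) (use that ls in \<open>auto intro!: exI[of _ l]\<close>)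
      show "A \<union> B \<subseteq> {y\<in>V. R1 x y}"
        using u ls i du rB unfolding A_def B_def V_def x by (auto simp: R1s)
    qed
    have disj: "A \<inter> B = {}" unfolding A_def B_def using flip_neq ls du
      by (auto) (metis diff_le_self le_trans not_le)
    have cA: "card A = deg u" unfolding A_def deg_def by (rule card_image) (simp add: inj_on_def)
    have "inj_on (\<lambda>l. (u, flip l s, i)) {..< d - deg u}"
      unfolding inj_on_def using flip_inj ls by (metis Pair_inject diff_le_self le_trans lessThan_iff not_le)
    then have cB: "card B = d - deg u" unfolding B_def by (simp add: card_image)
    have "card (A \<union> B) = card A + card B"
      by (rule card_Un_disjoint[OF _ _ disj]) (simp_all add: A_def B_def)
    then show "card {y\<in>V. R1 x y} = d" using eq cA cB du by simp
  qed
  have d2: "\<forall>x\<in>V. card {y\<in>V. R2 x y} = d"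
  proof
    fix x assume xV: "x \<in> V"
    obtain u s i where x: "x = (u, s, i)" by (cases x) auto
    have u: "u < k" and ls: "length s = d" and i: "i < d + 1" using xV unfolding x V_def by auto
    have eq: "{y\<in>V. R2 x y} = (\<lambda>j. (u, s, j)) ` ({0..<d+1} - {i})"
    proof
      show "{y\<in>V. R2 x y} \<subseteq> (\<lambda>j. (u, s, j)) ` ({0..<d+1} - {i})"
      proof
        fix y assume "y \<in> {y\<in>V. R2 x y}"
        then have yV: "y \<in> V" and r: "R2 x y" by auto
        obtain v t j where y: "y = (v, t, j)" by (cases y) auto
        have "j < d + 1" using yV unfolding y V_def by auto
        then show "y \<in> (\<lambda>j. (u, s, j)) ` ({0..<d+1} - {i})" using r unfolding x y by (auto simp: R2s)
      qed
      show "(\<lambda>j. (u, s, j)) ` ({0..<d+1} - {i}) \<subseteq> {y\<in>V. R2 x y}"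
        using u ls unfolding V_def x by (auto simp: R2s)
    qed
    have "card ((\<lambda>j. (u, s, j)) ` ({0..<d+1} - {i})) = card ({0..<d+1} - {i})"
      by (rule card_image) (simp add: inj_on_def)
    then show "card {y\<in>V. R2 x y} = d" using eq i by simp
  qed
  define s0 where "s0 = replicate d False"
  define Sz where "Sz = (\<lambda>v. (v, s0, 0::nat)) ` {0..<k}"
  have cp1: "\<exists>GS\<in>subgraphs mode (verts (mkg V R1 :: ('l, 'f) lgraph)) (arcs (mkg V R1 :: ('l, 'f) lgraph)).
           \<exists>f. iso_onto GS H f"
  proof (rule mkg_copy[where Sz = Sz and h = "\<beta> \<circ> fst"])
    show "Sz \<subseteq> V" unfolding Sz_def V_def s0_def by auto
    have "bij_betw fst Sz {0..<k}" unfolding Sz_def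
      by (rule bij_betw_byWitness[where f' = "\<lambda>v. (v, s0, 0::nat)"]) auto
    then show "bij_betw (\<beta> \<circ> fst) Sz (verts H)" using bij by (rule bij_betw_trans)
    show "sym (arcs H)" by (rule sH)
    show "\<forall>x\<in>Sz. \<forall>y\<in>Sz. ((\<beta> \<circ> fst) x, (\<beta> \<circ> fst) y) \<in> arcs H \<longrightarrow> R1 x y"
      unfolding Sz_def by (auto simp: R1s adj_def)
    have "\<not> (l < length s0 \<and> s0 = flip l s0)" for l using flip_neq by metis
    then show "mode = Induced_Matching \<longrightarrow> (\<forall>x\<in>Sz. \<forall>y\<in>Sz. R1 x y \<longrightarrow> ((\<beta> \<circ> fst) x, (\<beta> \<circ> fst) y) \<in> arcs H)"
      unfolding Sz_def by (auto simp: R1s adj_def)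
  qed
  define cp where "cp n = (let x = (from_nat n :: nat \<times> bool list \<times> nat) in (fst x, fst (snd x)))" for n
  have cpt: "cp (to_nat x) = (fst x, fst (snd x))" for x :: "nat \<times> bool list \<times> nat"
    by (simp add: cp_def)
  have kH: "card (verts H) = k" using bij_betw_same_card[OF bij] by simp
  have cp2: "\<not> (\<exists>GS\<in>subgraphs mode (verts (mkg V R2 :: ('l, 'f) lgraph)) (arcs (mkg V R2 :: ('l, 'f) lgraph)).
           \<exists>f. iso_onto GS H f)"
    using nc
  proof
    assume dk: "d + 1 < k"
    show ?thesis
    proof (rule no_copy_small[OF wH cH, where cp = cp])
      show "finite (verts (mkg V R2 :: ('l, 'f) lgraph))" using fV by (simp add: mkg_simps)
      show "\<forall>a b. (a, b) \<in> arcs (mkg V R2 :: ('l, 'f) lgraph) \<longrightarrow> cp a = cp b"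
        unfolding mkg_simps by (auto simp: cpt R2_def)
      show "\<forall>c. card {x \<in> verts (mkg V R2 :: ('l, 'f) lgraph). cp x = c} < card (verts H)"
      proof
        fix c :: "nat \<times> bool list"
        have "{x \<in> verts (mkg V R2 :: ('l, 'f) lgraph). cp x = c} \<subseteq> to_nat ` ((\<lambda>j. (fst c, snd c, j)) ` {0..<d+1})"
          unfolding mkg_simps V_def by (auto simp: cpt)
        then have "card {x \<in> verts (mkg V R2 :: ('l, 'f) lgraph). cp x = c} \<le> card (to_nat ` ((\<lambda>j. (fst c, snd c, j)) ` {0..<d+1}))"
          by (intro card_mono) auto
        also have "\<dots> \<le> d + 1"
          by (metis card_atLeastLessThan card_image_le diff_zero finite_atLeastLessThan finite_imageI le_trans)
        finally show "card {x \<in> verts (mkg V R2 :: ('l, 'f) lgraph). cp x = c} < card (verts H)"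
          using dk kH by simp
      qed
    qed
  next
    assume ind: "mode = Induced_Matching \<and> (\<exists>p' q'. p' \<in> verts H \<and> q' \<in> verts H \<and> p' \<noteq> q' \<and> (p', q') \<notin> arcs H)"
    then obtain p' q' where pq': "p' \<in> verts H" "q' \<in> verts H" "p' \<noteq> q'" "(p', q') \<notin> arcs H" by blast
    have "\<not> (\<exists>GS\<in>subgraphs Induced_Matching (verts (mkg V R2 :: ('l, 'f) lgraph)) (arcs (mkg V R2 :: ('l, 'f) lgraph)).
           \<exists>f. iso_onto GS H f)"
    proof (rule no_copy_clique[OF wH cH _ pq', where cp = cp])
      show "\<forall>a b. (a, b) \<in> arcs (mkg V R2 :: ('l, 'f) lgraph) \<longleftrightarrow>
          a \<in> verts (mkg V R2 :: ('l, 'f) lgraph) \<and> b \<in> verts (mkg V R2 :: ('l, 'f) lgraph) \<and> cp a = cp b \<and> a \<noteq> b"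
      proof (intro allI iffI)
        fix a b
        assume "(a, b) \<in> arcs (mkg V R2 :: ('l, 'f) lgraph)"
        then obtain x y where "a = to_nat x" "b = to_nat y" "x \<in> V" "y \<in> V" "R2 x y"
          unfolding mkg_simps by auto
        then show "a \<in> verts (mkg V R2 :: ('l, 'f) lgraph) \<and> b \<in> verts (mkg V R2 :: ('l, 'f) lgraph) \<and> cp a = cp b \<and> a \<noteq> b"
          unfolding mkg_simps by (cases x; cases y) (auto simp: cpt R2s)
      next
        fix a b
        assume "a \<in> verts (mkg V R2 :: ('l, 'f) lgraph) \<and> b \<in> verts (mkg V R2 :: ('l, 'f) lgraph) \<and> cp a = cp b \<and> a \<noteq> b"
        then obtain x y where "a = to_nat x" "b = to_nat y" "x \<in> V" "y \<in> V" "cp a = cp b" "a \<noteq> b"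
          unfolding mkg_simps by auto
        then show "(a, b) \<in> arcs (mkg V R2 :: ('l, 'f) lgraph)"
          unfolding mkg_simps by (cases x; cases y) (auto simp: cpt R2s)
      qed
    qed
    then show ?thesis using ind by simp
  qed
  show ?thesis
    by (rule finish_mkg[OF fV s1 i1 s2 i2 d1 d2 cp1 cp2 wH pq])
qed



lemma has_arc:
  assumes wH: "wf_sgraph H" and cH: "connected_graph H" and x: "x \<in> verts H" "y \<in> verts H" "x \<noteq> y"
  shows "\<exists>p q. (p, q) \<in> arcs H"
proof -
  have "(x, y) \<in> (arcs H)\<^sup>*" using cH x unfolding connected_graph_def by blast
  then show ?thesis using x(3) by (metis converse_rtranclE)
qed

theorem theorem3p1:
  fixes H :: "'w sgraph"
    and mode :: matching
    and var :: gsn_variant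
  assumes "wf_sgraph H"
    and "connected_graph H"
    and "(mode = Subgraph_Matching \<and> \<not> is_star H) \<or>
         (mode = Induced_Matching \<and> \<not> is_single_vertex H \<and> \<not> is_single_edge H)"
  shows
    "(\<forall>N :: ('l::countable, 'h, 'm, unit, 'f, 'o) mpnet.
        \<exists>N' :: ('l, 'h, 'm, 'w gsn_struct, 'f, 'o) mpnet.
          \<forall>G :: ('l, 'f) lgraph. wf_sgraph G \<longrightarrow> gsn_output mode var H N' G = mpnn_output N G)
   \<and> (\<forall>G1 G2 :: ('l, 'f) lgraph. wf_sgraph G1 \<longrightarrow> wf_sgraph G2 \<longrightarrow> wl_distinguishes G1 G2 \<longrightarrow>
        (\<exists>N :: ('l, nat, nat, 'w gsn_struct, 'f, nat) mpnet.
           gsn_output mode var H N G1 \<noteq> gsn_output mode var H N G2))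
   \<and> (\<exists>G1 G2 :: ('l, 'f) lgraph. wf_sgraph G1 \<and> wf_sgraph G2 \<and> \<not> wl_distinguishes G1 G2 \<and>
        (\<forall>N :: ('l, 'h, 'm, unit, 'f, 'o) mpnet. mpnn_output N G1 = mpnn_output N G2) \<and>
        (\<exists>N :: ('l, nat, nat, 'w gsn_struct, 'f, nat) mpnet.
           gsn_output mode var H N G1 \<noteq> gsn_output mode var H N G2))"
proof (intro conjI)
  note wH = assms(1) and cH = assms(2) and md = assms(3)
  show "\<forall>N :: ('l::countable, 'h, 'm, unit, 'f, 'o) mpnet.
        \<exists>N' :: ('l, 'h, 'm, 'w gsn_struct, 'f, 'o) mpnet.
          \<forall>G :: ('l, 'f) lgraph. wf_sgraph G \<longrightarrow> gsn_output mode var H N' G = mpnn_output N G"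
  proof
    fix N :: "('l::countable, 'h, 'm, unit, 'f, 'o) mpnet"
    obtain N' :: "('l, 'h, 'm, 'w gsn_struct, 'f, 'o) mpnet" where
      "\<forall>G. net_output (gsn_struct mode var H G) N' G = mpnn_output N G"
      using partA[where N = N and sfG = "\<lambda>G. gsn_struct mode var H G"] by blast
    then show "\<exists>N' :: ('l, 'h, 'm, 'w gsn_struct, 'f, 'o) mpnet.
          \<forall>G :: ('l, 'f) lgraph. wf_sgraph G \<longrightarrow> gsn_output mode var H N' G = mpnn_output N G"
      unfolding gsn_output_def by blast
  qed
  show "\<forall>G1 G2 :: ('l, 'f) lgraph. wf_sgraph G1 \<longrightarrow> wf_sgraph G2 \<longrightarrow> wl_distinguishes G1 G2 \<longrightarrow>
        (\<exists>N :: ('l, nat, nat, 'w gsn_struct, 'f, nat) mpnet.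
           gsn_output mode var H N G1 \<noteq> gsn_output mode var H N G2)"
    unfolding gsn_output_def using partB by blast
  show "\<exists>G1 G2 :: ('l, 'f) lgraph. wf_sgraph G1 \<and> wf_sgraph G2 \<and> \<not> wl_distinguishes G1 G2 \<and>
        (\<forall>N :: ('l, 'h, 'm, unit, 'f, 'o) mpnet. mpnn_output N G1 = mpnn_output N G2) \<and>
        (\<exists>N :: ('l, nat, nat, 'w gsn_struct, 'f, nat) mpnet.
           gsn_output mode var H N G1 \<noteq> gsn_output mode var H N G2)"
  proof -
    define k where "k = card (verts H)"
    have fH: "finite (verts H)" and AH: "arcs H \<subseteq> verts H \<times> verts H"
      and irr: "irrefl (arcs H)" and sH: "sym (arcs H)" using wH unfolding wf_sgraph_def by auto
    obtain \<beta> where bij: "bij_betw \<beta> {0..<k} (verts H)"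
      using ex_bij_betw_nat_finite[OF fH] unfolding k_def by blast
    have img: "\<beta> ` {0..<k} = verts H" and inj: "inj_on \<beta> {0..<k}" using bij by (auto simp: bij_betw_def)
    have ne: "verts H \<noteq> {}" using cH unfolding connected_graph_def by auto
    have k1: "k \<noteq> 1"
    proof
      assume "k = 1"
      then obtain a where Va: "verts H = {a}" unfolding k_def using card_1_singletonE by blast
      have Ae: "arcs H = {}" using AH irr Va unfolding irrefl_def by auto
      have "is_single_vertex H" unfolding is_single_vertex_def using Va Ae by blast
      moreover have "is_star H" unfolding is_star_def using Va Ae by auto
      ultimately show False using md by auto
    qed
    have k0: "k \<noteq> 0" using ne fH unfolding k_def by simp
    have k2: "k \<ge> 2" using k0 k1 by linarith
    obtain x0 y0 where xy0: "x0 \<in> verts H" "y0 \<in> verts H" "x0 \<noteq> y0"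
    proof -
      have "\<beta> 0 \<in> verts H" "\<beta> 1 \<in> verts H" using img k2 by auto
      moreover have "\<beta> 0 \<noteq> \<beta> 1" using inj k2 unfolding inj_on_def by force
      ultimately show ?thesis using that by blast
    qed
    obtain p q where pq: "(p, q) \<in> arcs H" using has_arc[OF wH cH xy0] by blast
    define T where "T = (\<exists>p q r. (p, q) \<in> arcs H \<and> (q, r) \<in> arcs H \<and> (p, r) \<in> arcs H)"
    define C where "C = (\<forall>i<k. \<forall>j<k. i \<noteq> j \<longrightarrow> (\<beta> i, \<beta> j) \<in> arcs H)"
    have degle: "card {v\<in>{0..<k}. (\<beta> u, \<beta> v) \<in> arcs H} \<le> k - 1" if "u < k" for u
    proof -
      have "{v\<in>{0..<k}. (\<beta> u, \<beta> v) \<in> arcs H} \<subseteq> {0..<k} - {u}" using irr unfolding irrefl_def by auto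
      then have "card {v\<in>{0..<k}. (\<beta> u, \<beta> v) \<in> arcs H} \<le> card ({0..<k} - {u})" by (intro card_mono) auto
      then show ?thesis using that by simp
    qed
    show ?thesis
    proof (cases "T \<and> (mode = Subgraph_Matching \<or> C)")
      case True
      then obtain p q r where tri: "(p, q) \<in> arcs H" "(q, r) \<in> arcs H" "(p, r) \<in> arcs H"
        unfolding T_def by blast
      have "mode = Induced_Matching \<longrightarrow> C" using True by (cases mode) auto
      then show ?thesis by (rule pair2[OF wH bij tri, unfolded C_def[symmetric]])
    next
      case False
      show ?thesis
      proof (cases mode)
        case Subgraph_Matching
        have ns: "\<not> is_star H" using md Subgraph_Matching by simp
        have nT: "\<not> T" using False Subgraph_Matching by simp
        have degb: "\<forall>u<k. card {v\<in>{0..<k}. (\<beta> u, \<beta> v) \<in> arcs H} \<le> k - 2"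
        proof (intro allI impI)
          fix u assume u: "u < k"
          show "card {v\<in>{0..<k}. (\<beta> u, \<beta> v) \<in> arcs H} \<le> k - 2"
          proof (rule ccontr)
            assume "\<not> ?thesis"
            moreover have c1: "card ({0..<k} - {u}) = k - 1" using u by simp
            ultimately have ge: "card {v\<in>{0..<k}. (\<beta> u, \<beta> v) \<in> arcs H} \<ge> card ({0..<k} - {u})"
              using k2 by linarith
            have sub: "{v\<in>{0..<k}. (\<beta> u, \<beta> v) \<in> arcs H} \<subseteq> {0..<k} - {u}" using irr unfolding irrefl_def by auto
            have eqs: "{v\<in>{0..<k}. (\<beta> u, \<beta> v) \<in> arcs H} = {0..<k} - {u}"
              by (rule card_seteq[OF _ sub ge]) simp
            define c where "c = \<beta> u"
            have cV: "c \<in> verts H" using bij u unfolding c_def by (simp add: bij_betwE)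
            have univ: "(c, x) \<in> arcs H" if xa: "x \<in> verts H" "x \<noteq> c" for x
            proof -
              have "x \<in> \<beta> ` {0..<k}" using xa img by simp
              then obtain j where j: "j < k" "x = \<beta> j" by auto
              then have "j \<noteq> u" using xa unfolding c_def by auto
              then have "j \<in> {v\<in>{0..<k}. (\<beta> u, \<beta> v) \<in> arcs H}" using eqs j(1) by simp
              then show ?thesis unfolding c_def j(2) by simp
            qed
            have star_iff: "(x, y) \<in> arcs H \<longleftrightarrow> (x \<in> verts H \<and> y \<in> verts H \<and> x \<noteq> y \<and> (x = c \<or> y = c))"
              for x y
            proof
              assume a: "(x, y) \<in> arcs H"
              then have xyV: "x \<in> verts H" "y \<in> verts H" using AH by auto
              have "x \<noteq> y" using a irr unfolding irrefl_def by auto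
              moreover have "x = c \<or> y = c"
              proof (rule ccontr)
                assume "\<not> (x = c \<or> y = c)"
                then have "(c, x) \<in> arcs H" "(c, y) \<in> arcs H" using univ xyV by auto
                then have T using a unfolding T_def by blast
                then show False using nT by simp
              qed
              ultimately show "x \<in> verts H \<and> y \<in> verts H \<and> x \<noteq> y \<and> (x = c \<or> y = c)" using xyV by simp
            next
              assume b: "x \<in> verts H \<and> y \<in> verts H \<and> x \<noteq> y \<and> (x = c \<or> y = c)"
              show "(x, y) \<in> arcs H"
              proof (cases "x = c")
                case True
                then show ?thesis using univ b by auto
              next
                case False
                then have "y = c" using b by simp
                then have "(y, x) \<in> arcs H" using univ b False by auto
                then show ?thesis using sH unfolding sym_def by blast
              qed
            qed
            have "is_star H" unfolding is_star_def by (intro bexI[OF _ cV] allI star_iff)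
            then show False using ns by simp
          qed
        qed
        have "k - 2 + 1 < k" using k2 by simp
        then show ?thesis by (rule pair1[OF wH cH bij pq degb, OF disjI1])
      next
        case Induced_Matching
        have nse: "\<not> is_single_edge H" using md Induced_Matching by simp
        have nC: "\<not> C"
        proof
          assume C: C
          show False
          proof (cases "k \<ge> 3")
            case True
            then have "(\<beta> 0, \<beta> 1) \<in> arcs H" "(\<beta> 1, \<beta> 2) \<in> arcs H" "(\<beta> 0, \<beta> 2) \<in> arcs H"
              using C unfolding C_def by auto
            then have T unfolding T_def by blast
            then show False using False C by blast
          next
            case False
            then have "k = 2" using k2 by simp
            have "{0..<k} = {0, 1::nat}" using \<open>k = 2\<close> by auto
            then have V2: "verts H = {\<beta> 0, \<beta> 1}" using img by simp
            have neq: "\<beta> 0 \<noteq> \<beta> 1" using inj \<open>k = 2\<close> unfolding inj_on_def by force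
            have a01: "(\<beta> 0, \<beta> 1) \<in> arcs H" "(\<beta> 1, \<beta> 0) \<in> arcs H" using C \<open>k = 2\<close> unfolding C_def by auto
            have "arcs H = {(\<beta> 0, \<beta> 1), (\<beta> 1, \<beta> 0)}"
            proof
              show "arcs H \<subseteq> {(\<beta> 0, \<beta> 1), (\<beta> 1, \<beta> 0)}"
                using AH irr V2 unfolding irrefl_def by auto
              show "{(\<beta> 0, \<beta> 1), (\<beta> 1, \<beta> 0)} \<subseteq> arcs H" using a01 by auto
            qed
            then have "is_single_edge H" unfolding is_single_edge_def using V2 neq by blast
            then show False using nse by blast
          qed
        qed
        then obtain i j where ij: "i < k" "j < k" "i \<noteq> j" "(\<beta> i, \<beta> j) \<notin> arcs H"
          unfolding C_def by auto
        have bi: "\<beta> i \<in> verts H" "\<beta> j \<in> verts H" using ij(1,2) img by auto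
        have bij': "\<beta> i \<noteq> \<beta> j" using inj_on_eq_iff[OF inj, of i j] ij(1-3) by simp
        have nc: "mode = Induced_Matching \<and> (\<exists>p' q'. p' \<in> verts H \<and> q' \<in> verts H \<and> p' \<noteq> q' \<and> (p', q') \<notin> arcs H)"
          using Induced_Matching ij(4) bi bij' by blast
        have degb: "\<forall>u<k. card {v\<in>{0..<k}. (\<beta> u, \<beta> v) \<in> arcs H} \<le> k - 1" using degle by simp
        show ?thesis by (rule pair1[OF wH cH bij pq degb, OF disjI2[OF nc]])
      qed
    qed
  qed
qed

end
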